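(* The Dyck language $D$ over $\{a,b\}$ is not accepted by any left one-way jumping finite automaton (LOWJFA).
   Context: The Dyck language $D\subseteq\{a,b\}^*$ is the set of well-balanced words with $a$ as opening and $b$ as closing bracket: $w\in D$ iff $|w|_a=|w|_b$ and every prefix $u$ of $w$ satisfies $|u|_a\ge|u|_b$ (here $|w|_a$ counts occurrences of $a$). A LOWJFA is a tuple $\mathcal{A}=(\Sigma,Q,q_0,F,R)$ with $\Sigma$ a finite alphabet, $Q$ a finite set of states, $q_0\in Q$, $F\subseteq Q$, and $R\subseteq Q\times\Sigma\times Q$, where a rule $(q,a,p)\in R$ means the automaton goes from state $p$ to state $q$ deleting the symbol $a$ (with at most one target state per state and symbol). For $p\in Q$ let $\Sigma_p=\{a\in\Sigma:(q,a,p)\in R\text{ for some } q\}$. Configurations are strings in $\Sigma^*Q$. If $(q,a,p)\in R$, $x\in(\Sigma\setminus\Sigma_p)^*$ and $y\in\Sigma^*$, then the automaton moves from configuration $yaxp$ to configuration $xyq$. The accepted language is $L_L(\mathcal{A})=\{w\in\Sigma^*: \text{from configuration } wq_0 \text{ some } q_f\in F \text{ is reachable by finitely many moves}\}$. *)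

theory Defs
  imports Main
begin

definition dyck :: "'s \<Rightarrow> 's \<Rightarrow> 's list set" where
  "dyck a b = {w. set w \<subseteq> {a, b} \<and> count_list w a = count_list w b \<and>
       (\<forall>u v. w = u @ v \<longrightarrow> count_list u b \<le> count_list u a)}"

(* A LOWJFA (Sigma, Q, q0, F, R); rule (q, c, p) : R means from state p to state q
   deleting c. *)
definition is_lowjfa :: "'s set \<Rightarrow> 'q set \<Rightarrow> 'q \<Rightarrow> 'q set \<Rightarrow> ('q \<times> 's \<times> 'q) set \<Rightarrow> bool" where
  "is_lowjfa Sig Q q0 F R \<longleftrightarrow> finite Sig \<and> finite Q \<and> q0 \<in> Q \<and> F \<subseteq> Q \<and>
     R \<subseteq> Q \<times> Sig \<times> Q \<and>
     (\<forall>p c q q'. (q, c, p) \<in> R \<longrightarrow> (q', c, p) \<in> R \<longrightarrow> q = q')"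

definition sigma_of :: "('q \<times> 's \<times> 'q) set \<Rightarrow> 'q \<Rightarrow> 's set" where
  "sigma_of R p = {c. \<exists>q. (q, c, p) \<in> R}"

definition lstep :: "('q \<times> 's \<times> 'q) set \<Rightarrow> ('s list \<times> 'q) \<Rightarrow> ('s list \<times> 'q) \<Rightarrow> bool" where
  "lstep R C C' \<longleftrightarrow> (\<exists>q c p x y. (q, c, p) \<in> R \<and> set x \<inter> sigma_of R p = {} \<and>
       C = (y @ [c] @ x, p) \<and> C' = (x @ y, q))"

definition lang_L :: "'s set \<Rightarrow> ('q \<times> 's \<times> 'q) set \<Rightarrow> 'q \<Rightarrow> 'q set \<Rightarrow> 's list set" where
  "lang_L Sig R q0 F = {w. set w \<subseteq> Sig \<and> (\<exists>qf\<in>F. (lstep R)\<^sup>*\<^sup>* (w, q0) ([], qf))}"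

end

theory Submission
  imports Defs
begin

lemma count_rep[simp]: "count_list (replicate n x) y = (if x = y then n else 0)"
  by (induction n) auto

lemma decomp_unique:
  assumes "y1 @ c1 # x1 = y2 @ c2 # x2" "c1 \<in> S" "c2 \<in> S" "set x1 \<inter> S = {}" "set x2 \<inter> S = {}"
  shows "x1 = x2 \<and> y1 = y2 \<and> c1 = c2"
proof -
  from assms(1) obtain us where "(y1 = y2@us \<and> us@c1#x1 = c2#x2) \<or> (y1@us = y2 \<and> c1#x1 = us@c2#x2)"
    by (auto simp: append_eq_append_conv2)
  then show ?thesis using assms(2-5) by (cases us) auto
qed

lemma dyck_anbn: "a \<noteq> b \<Longrightarrow> replicate n a @ replicate n b \<in> dyck a b"
  unfolding dyck_def
proof (safe)
  fix u v assume ab: "a \<noteq> b" and e: "replicate n a @ replicate n b = u @ v"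
  then obtain us where "(replicate n a = u @ us \<and> us @ replicate n b = v) \<or> (replicate n a @ us = u \<and> replicate n b = us @ v)"
    by (auto simp: append_eq_append_conv2)
  then show "count_list u b \<le> count_list u a"
  proof
    assume h: "replicate n a @ us = u \<and> replicate n b = us @ v"
    then have "us = replicate (length us) b" 
      by (metis replicate_eqI in_set_replicate Un_iff set_append)
    moreover have "length us \<le> n" using h by (metis le_add1 length_append length_replicate)
    ultimately show ?thesis using h ab by (metis count_list_append count_rep add_0 add.commute) 
  next
    assume h: "replicate n a = u @ us \<and> us @ replicate n b = v"
    then have "u = replicate (length u) a" by (metis replicate_eqI in_set_replicate Un_iff set_append)
    then show ?thesis using ab by (metis count_rep zero_le)
  qed
qed (auto)


definition accR :: "('q \<times> 's \<times> 'q) set \<Rightarrow> 'q set \<Rightarrow> ('s list \<times> 'q) \<Rightarrow> bool" where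
  "accR R F C = (\<exists>qf\<in>F. (lstep R)\<^sup>*\<^sup>* C ([], qf))"

definition detR :: "('q \<times> 's \<times> 'q) set \<Rightarrow> bool" where
  "detR R = (\<forall>p c q q'. (q, c, p) \<in> R \<longrightarrow> (q', c, p) \<in> R \<longrightarrow> q = q')"

lemma lstep_det:
  assumes "lstep R C C1" "lstep R C C2" "detR R" shows "C1 = C2"
proof -
  obtain q c p x y where 1: "(q, c, p) \<in> R" "set x \<inter> sigma_of R p = {}" "C = (y @ [c] @ x, p)" "C1 = (x @ y, q)"
    using assms(1) unfolding lstep_def by blast
  obtain q' c' p' x' y' where 2: "(q', c', p') \<in> R" "set x' \<inter> sigma_of R p' = {}" "C = (y' @ [c'] @ x', p')" "C2 = (x' @ y', q')"
    using assms(2) unfolding lstep_def by blast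
  have pp: "p' = p" using 1 2 by simp
  have "c \<in> sigma_of R p" "c' \<in> sigma_of R p" using 1 2 pp by (auto simp: sigma_of_def)
  then have "x = x' \<and> y = y' \<and> c = c'" using decomp_unique[of y c x y' c' x' "sigma_of R p"] 1 2 pp by auto
  then show ?thesis using 1 2 pp assms(3) unfolding detR_def by blast
qed

lemma lstep_ne: "lstep R C C' \<Longrightarrow> fst C \<noteq> []"
  unfolding lstep_def by auto

lemma acc_step: assumes "lstep R C C'" "detR R" shows "accR R F C = accR R F C'"
proof
  assume "accR R F C'" then show "accR R F C" using assms(1) unfolding accR_def
    by (meson converse_rtranclp_into_rtranclp)
next
  assume "accR R F C"
  then obtain qf where qf: "qf \<in> F" "(lstep R)\<^sup>*\<^sup>* C ([], qf)" unfolding accR_def by blast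
  from qf(2) show "accR R F C'"
  proof (cases rule: converse_rtranclpE)
    case base then show ?thesis using lstep_ne[OF assms(1)] by simp
  next
    case (step C'')
    then have "C'' = C'" using lstep_det assms by metis
    then show ?thesis using step qf(1) unfolding accR_def by blast
  qed
qed

lemma acc_star: assumes "(lstep R)\<^sup>*\<^sup>* C C'" "detR R" shows "accR R F C = accR R F C'"
  using assms(1)
proof (induction rule: rtranclp_induct)
  case (step y z) then show ?case using acc_step[OF step(2) assms(2), of F] by simp
qed simp

lemma no_acc: assumes "sigma_of R p = {}" "w \<noteq> []" shows "\<not> accR R F (w, p)"
proof
  assume "accR R F (w, p)"
  then obtain qf where "(lstep R)\<^sup>*\<^sup>* (w, p) ([], qf)" unfolding accR_def by blast
  then show False
  proof (cases rule: converse_rtranclpE)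
    case base then show ?thesis using assms by simp
  next
    case (step C'')
    then show ?thesis using assms(1) unfolding lstep_def sigma_of_def by auto
  qed
qed

lemma mk_step: "(q, c, p) \<in> R \<Longrightarrow> set x \<inter> sigma_of R p = {} \<Longrightarrow> lstep R (y @ c # x, p) (x @ y, q)"
  unfolding lstep_def by force


theorem lemma2:
  fixes Sig :: "'s set" and Q :: "'q set" and q0 :: 'q and F :: "'q set"
    and R :: "('q \<times> 's \<times> 'q) set" and a b :: 's
  assumes "a \<noteq> b" and "Sig = {a, b}"
    and "is_lowjfa Sig Q q0 F R"
  shows "lang_L Sig R q0 F \<noteq> dyck a b"
proof
  assume L: "lang_L Sig R q0 F = dyck a b"
  have ab: "a \<noteq> b" by fact
  have fin: "finite Q" and q0Q: "q0 \<in> Q" and RQ: "R \<subseteq> Q \<times> Sig \<times> Q" and det: "detR R"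
    using assms(3) unfolding is_lowjfa_def detR_def by auto
  have key: "w \<in> dyck a b \<longleftrightarrow> accR R F (w, q0)" if "set w \<subseteq> {a, b}" for w
    using that L[symmetric] assms(2) unfolding lang_L_def accR_def by auto
  have sigsub: "sigma_of R p \<subseteq> {a, b}" for p
    using RQ assms(2) unfolding sigma_of_def by auto
  define full where "full p = (a \<in> sigma_of R p \<and> b \<in> sigma_of R p)" for p
  define g where "g = rec_nat q0 (\<lambda>_ p. SOME q. (q, b, p) \<in> R)"
  have g0: "g 0 = q0" unfolding g_def by simp
  have gS: "g (Suc i) = (SOME q. (q, b, g i) \<in> R)" for i unfolding g_def by simp
  have gR: "(g (Suc i), b, g i) \<in> R" if "b \<in> sigma_of R (g i)" for i
    using that unfolding gS sigma_of_def by (metis (mono_tags, lifting) mem_Collect_eq someI_ex)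
  have run: "(\<forall>i<k. full (g (s + i))) \<Longrightarrow> (lstep R)\<^sup>*\<^sup>* (u @ replicate k b, g s) (u, g (s + k))"
    for k s u
  proof (induction k arbitrary: s)
    case 0 then show ?case by simp
  next
    case (Suc k)
    have "full (g s)" using Suc.prems by (metis add_0_right zero_less_Suc)
    then have "(g (Suc s), b, g s) \<in> R" using gR unfolding full_def by blast
    from mk_step[OF this, of "[]" "u @ replicate k b"]
    have st: "lstep R (u @ replicate (Suc k) b, g s) (u @ replicate k b, g (Suc s))"
      by (simp add: replicate_append_same[symmetric])
    have "\<forall>i<k. full (g (Suc s + i))" using Suc.prems by auto
    from Suc.IH[OF this] st show ?case
      by (metis add_Suc_shift add_Suc_right converse_rtranclp_into_rtranclp)
  qed
  have accrun: "accR R F (u @ replicate k b, q0) = accR R F (u, g k)" if "\<forall>i<k. full (g i)" for u k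
    using acc_star[OF run[of k 0 u] det] that g0 by simp
  show False
  proof (cases "\<exists>k. \<not> full (g k)")
    case True
    then obtain k where k: "\<not> full (g k)" "\<forall>i<k. full (g i)"
      using exists_least_iff[of "\<lambda>k. \<not> full (g k)"] by blast
    define p where "p = g k"
    have w1: "accR R F (replicate (Suc k) a @ [b], p)"
    proof -
      have "replicate (Suc k) a @ replicate (Suc k) b \<in> dyck a b" using dyck_anbn[OF ab] .
      moreover have "replicate (Suc k) a @ replicate (Suc k) b = (replicate (Suc k) a @ [b]) @ replicate k b"
        by (simp add: replicate_append_same[symmetric])
      ultimately have "accR R F ((replicate (Suc k) a @ [b]) @ replicate k b, q0)"
        using key[of "(replicate (Suc k) a @ [b]) @ replicate k b"] by (auto simp: set_replicate_conv_if)
      then show ?thesis using accrun[OF k(2), of "replicate (Suc k) a @ [b]"] p_def by presburger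
    qed
    have w2: "\<not> accR R F (b # replicate (Suc k) a, p)"
    proof -
      have "(b # replicate (Suc k) a) @ replicate k b \<notin> dyck a b"
      proof
        assume "(b # replicate (Suc k) a) @ replicate k b \<in> dyck a b"
        then have H: "\<forall>u v. (b # replicate (Suc k) a) @ replicate k b = u @ v \<longrightarrow> count_list u b \<le> count_list u a"
          unfolding dyck_def by blast
        have "count_list [b] b \<le> count_list [b] a"
          using H[rule_format, of "[b]" "replicate (Suc k) a @ replicate k b"] by simp
        then show False using ab by simp
      qed
      then have "\<not> accR R F ((b # replicate (Suc k) a) @ replicate k b, q0)"
        using key[of "(b # replicate (Suc k) a) @ replicate k b"] by (auto simp: set_replicate_conv_if)
      then show ?thesis using accrun[OF k(2), of "b # replicate (Suc k) a"] p_def by presburger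
    qed
    consider "sigma_of R p = {}" | "a \<in> sigma_of R p" "b \<notin> sigma_of R p" | "b \<in> sigma_of R p" "a \<notin> sigma_of R p"
      using k(1) sigsub[of p] p_def unfolding full_def by blast
    then show False
    proof cases
      case 1 then show False using no_acc w1 by fastforce
    next
      case 2
      then obtain q where q: "(q, a, p) \<in> R" unfolding sigma_of_def by auto
      have s1: "lstep R (replicate (Suc k) a @ [b], p) ([b] @ replicate k a, q)"
        using mk_step[OF q, of "[b]" "replicate k a"] 2 by (simp add: replicate_append_same[symmetric])
      have s2: "lstep R (b # replicate (Suc k) a, p) ([] @ (b # replicate k a), q)"
        using mk_step[OF q, of "[]" "b # replicate k a"] by (simp add: replicate_append_same[symmetric])
      show False using acc_step[OF s1 det, of F] acc_step[OF s2 det, of F] w1 w2 by simp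
    next
      case 3
      then obtain q where q: "(q, b, p) \<in> R" unfolding sigma_of_def by auto
      have s1: "lstep R (replicate (Suc k) a @ [b], p) ([] @ replicate (Suc k) a, q)"
        using mk_step[OF q, of "[]" "replicate (Suc k) a"] by simp
      have s2: "lstep R (b # replicate (Suc k) a, p) (replicate (Suc k) a @ [], q)"
        using mk_step[OF q, of "replicate (Suc k) a" "[]"] 3 by (auto simp: set_replicate_conv_if)
      show False using acc_step[OF s1 det, of F] acc_step[OF s2 det, of F] w1 w2 by simp
    qed
  next
    case False
    then have allfull: "full (g k)" for k by blast
    have gQ: "g i \<in> Q" for i
    proof (induction i)
      case 0 then show ?case using g0 q0Q by simp
    next
      case (Suc i)
      have "(g (Suc i), b, g i) \<in> R" using gR allfull unfolding full_def by blast
      then show ?case using RQ by auto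
    qed
    have "\<not> inj_on g {..card Q}"
    proof
      assume "inj_on g {..card Q}"
      then have "card {..card Q} \<le> card Q" using card_inj_on_le[of g "{..card Q}" Q] gQ fin by blast
      then show False by simp
    qed
    then obtain i j where ij: "i < j" "g i = g j"
      unfolding inj_on_def by (metis atMost_iff linorder_neqE_nat)
    have "replicate j a @ replicate j b \<in> dyck a b" using dyck_anbn[OF ab] .
    then have "accR R F (replicate j a @ replicate j b, q0)"
      using key[of "replicate j a @ replicate j b"] by (auto simp: set_replicate_conv_if)
    then have "accR R F (replicate j a, g i)" using accrun[of j "replicate j a"] allfull ij by simp
    then have "accR R F (replicate j a @ replicate i b, q0)" using accrun[of i "replicate j a"] allfull by simp
    then have "replicate j a @ replicate i b \<in> dyck a b"
      using key[of "replicate j a @ replicate i b"] by (auto simp: set_replicate_conv_if)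
    then show False using ij ab unfolding dyck_def by simp
  qed
qed

end
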